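(* Let $L=K$, let ${\bf X}$ and ${\bf Z}$ be real $n\times K$ matrices, ${\bf D_X},{\bf D_Z}$ diagonal $K\times K$ matrices, $\Psi_n=\frac1n{\bf D_Z}{\bf Z}^T{\bf X}{\bf D_X}$, $c\in(0,1)$ and $J\subseteq\{1,\dots,K\}$ nonempty. Suppose that for some $\widetilde\kappa>0$ $$\inf_{\Delta\in C_J\setminus\{0\}}\frac{|{\bf X}{\bf D_X}\Delta|_2}{\sqrt n\,|\Delta_J|_2}\ge\widetilde\kappa,$$ and that for some $0<\eta<1$ $$\Big|\frac1n\big({\bf X}{\bf D_X}-{\bf Z}{\bf D_Z}\big)^T{\bf X}{\bf D_X}\Big|_\infty\le\frac{\eta(1-c)^2\widetilde\kappa^2}{4|J|},$$ where for a matrix $|\cdot|_\infty$ denotes the maximal absolute entry. Then $$\kappa_{1,J}\ge\frac{(1-\eta)(1-c)^2\widetilde\kappa^2}{4|J|}.$$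
   Context: $\Delta_J$ zeroes coordinates outside $J$, $J^c$ complement, $|\cdot|_p$ the $\ell_p$ norm of a vector. $C_J=\{\Delta\in\mathbb R^K:|\Delta_{J^c}|_1\le\frac{1+c}{1-c}|\Delta_J|_1\}$; $\kappa_{1,J}=\inf\{|\Psi_n\Delta|_\infty:\Delta\in C_J,|\Delta|_1=1\}$. In the paper ${\bf D_X}={\rm diag}(x_{k*}^{-1})$ and ${\bf D_Z}={\rm diag}(z_{l*}^{-1})$ with $x_{k*},z_{l*}$ the maximal absolute entries of the columns of ${\bf X},{\bf Z}$. *)

theory Defs
  imports "HOL-Analysis.Analysis"
begin

text \<open>Vectors in R^K are real^'k; index set {1..K} is the finite type 'k.\<close>

definition l1norm :: "real^'k \<Rightarrow> real" where
  "l1norm v = (\<Sum>i\<in>UNIV. \<bar>v $ i\<bar>)"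

definition linfnorm :: "real^'k \<Rightarrow> real" where
  "linfnorm v = Max (range (\<lambda>i. \<bar>v $ i\<bar>))"

definition mat_maxabs :: "real^'c^'r \<Rightarrow> real" where
  "mat_maxabs M = Max {\<bar>M $ i $ j\<bar> | i j. True}"

definition restr :: "'k set \<Rightarrow> real^'k \<Rightarrow> real^'k" where
  "restr J v = (\<chi> i. if i \<in> J then v $ i else 0)"

definition coneC :: "real \<Rightarrow> 'k set \<Rightarrow> (real^'k) set" where
  "coneC c J = {\<Delta>. l1norm (restr (- J) \<Delta>) \<le> (1 + c) / (1 - c) * l1norm (restr J \<Delta>)}"

definition kappa1 :: "real \<Rightarrow> real^'k^'k \<Rightarrow> 'k set \<Rightarrow> real" where
  "kappa1 c Psi J = Inf {linfnorm (Psi *v \<Delta>) | \<Delta>. \<Delta> \<in> coneC c J \<and> l1norm \<Delta> = 1}"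

definition is_diag :: "real^'k^'k \<Rightarrow> bool" where
  "is_diag D \<longleftrightarrow> (\<forall>i j. i \<noteq> j \<longrightarrow> D $ i $ j = 0)"

end

theory Submission imports Defs begin

lemma maxabs_ge: "\<bar>M $ i $ j\<bar> \<le> mat_maxabs (M::real^'c^'r)"
proof -
  have e: "{\<bar>M $ i $ j\<bar> | i j. True} = (\<lambda>(i,j). \<bar>M $ i $ j\<bar>) ` UNIV" by auto
  show ?thesis unfolding mat_maxabs_def e by (rule Max_ge) auto
qed

lemma linf_ge: "\<bar>v $ i\<bar> \<le> linfnorm (v::real^'k)"
  unfolding linfnorm_def by (rule Max_ge) auto

lemma dot_linf: "x \<bullet> v \<le> linfnorm v * l1norm (x::real^'k)"
proof -
  have "x \<bullet> v = (\<Sum>i\<in>UNIV. x$i * v$i)" by (simp add: inner_vec_def)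
  also have "\<dots> \<le> (\<Sum>i\<in>UNIV. linfnorm v * \<bar>x$i\<bar>)"
  proof (rule sum_mono)
    fix i
    have "x$i * v$i \<le> \<bar>x$i\<bar> * \<bar>v$i\<bar>" by (metis abs_ge_self abs_mult)
    also have "\<dots> \<le> \<bar>x$i\<bar> * linfnorm v" by (rule mult_left_mono[OF linf_ge]) simp
    finally show "x$i * v$i \<le> linfnorm v * \<bar>x$i\<bar>" by (simp add: mult.commute)
  qed
  finally show ?thesis by (simp add: l1norm_def sum_distrib_left)
qed

lemma dot_mat_bound:
  "\<bar>x \<bullet> (M *v y)\<bar> \<le> mat_maxabs M * l1norm x * l1norm (y::real^'k)"
  for x :: "real^'r" and M :: "real^'k^'r"
proof -
  have "x \<bullet> (M *v y) = (\<Sum>i\<in>UNIV. \<Sum>j\<in>UNIV. x$i * M$i$j * y$j)"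
    by (simp add: inner_vec_def matrix_vector_mult_def sum_distrib_left mult.assoc)
  hence "\<bar>x \<bullet> (M *v y)\<bar> \<le> (\<Sum>i\<in>UNIV. \<bar>\<Sum>j\<in>UNIV. x$i * M$i$j * y$j\<bar>)"
    by (simp only: sum_abs)
  also have "\<dots> \<le> (\<Sum>i\<in>UNIV. \<Sum>j\<in>UNIV. \<bar>x$i * M$i$j * y$j\<bar>)"
    by (intro sum_mono sum_abs)
  also have "\<dots> \<le> (\<Sum>i\<in>UNIV. \<Sum>j\<in>UNIV. \<bar>x$i\<bar> * mat_maxabs M * \<bar>y$j\<bar>)"
  proof (intro sum_mono)
    fix i j
    have "\<bar>x$i\<bar> * \<bar>M$i$j\<bar> \<le> \<bar>x$i\<bar> * mat_maxabs M"
      by (intro mult_left_mono maxabs_ge) simp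
    hence "\<bar>x$i\<bar> * \<bar>M$i$j\<bar> * \<bar>y$j\<bar> \<le> \<bar>x$i\<bar> * mat_maxabs M * \<bar>y$j\<bar>"
      by (intro mult_right_mono) simp_all
    thus "\<bar>x$i * M$i$j * y$j\<bar> \<le> \<bar>x$i\<bar> * mat_maxabs M * \<bar>y$j\<bar>" by (simp add: abs_mult)
  qed
  also have "\<dots> = mat_maxabs M * l1norm x * l1norm y"
    by (simp add: l1norm_def sum_distrib_left sum_distrib_right mult_ac)
  finally show ?thesis .
qed

lemma l1_split: "l1norm (\<Delta>::real^'k) = l1norm (restr J \<Delta>) + l1norm (restr (-J) \<Delta>)"
  unfolding l1norm_def restr_def by (simp add: sum.distrib[symmetric]) (intro sum.cong, auto)

lemma l1_restr: "l1norm (restr J (\<Delta>::real^'k)) = (\<Sum>i\<in>J. \<bar>\<Delta>$i\<bar>)"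
proof -
  have "(\<Sum>i\<in>J. \<bar>\<Delta>$i\<bar>) = (\<Sum>i\<in>UNIV \<inter> J. \<bar>\<Delta>$i\<bar>)" by simp
  also have "\<dots> = (\<Sum>i\<in>UNIV. if i \<in> J then \<bar>\<Delta>$i\<bar> else 0)" by (rule sum.inter_restrict) simp
  finally show ?thesis unfolding l1norm_def restr_def by (simp add: if_distrib)
qed

lemma norm2_restr: "(norm (restr J (\<Delta>::real^'k)))^2 = (\<Sum>i\<in>J. (\<Delta>$i)^2)"
proof -
  have "(\<Sum>i\<in>J. (\<Delta>$i)^2) = (\<Sum>i\<in>UNIV \<inter> J. (\<Delta>$i)^2)" by simp
  also have "\<dots> = (\<Sum>i\<in>UNIV. if i \<in> J then (\<Delta>$i)^2 else 0)" by (rule sum.inter_restrict) simp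
  finally show ?thesis unfolding power2_norm_eq_inner restr_def
    by (simp add: inner_vec_def) (rule sum.cong; simp add: power2_eq_square)
qed

lemma l1_J_le: "l1norm (restr J (\<Delta>::real^'k)) \<le> sqrt (card J) * norm (restr J \<Delta>)"
proof (rule power2_le_imp_le)
  have "(l1norm (restr J \<Delta>))^2 \<le> (\<Sum>i\<in>J. (\<bar>\<Delta>$i\<bar>)^2) * card J"
    unfolding l1_restr by (rule sum_squared_le_sum_of_squares)
  also have "\<dots> = (sqrt (card J) * norm (restr J \<Delta>))^2"
    by (simp add: power_mult_distrib norm2_restr)
  finally show "(l1norm (restr J \<Delta>))^2 \<le> (sqrt (card J) * norm (restr J \<Delta>))^2" .
  show "0 \<le> sqrt (card J) * norm (restr J \<Delta>)" by simp
qed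


lemma transpose_diff: "transpose (A - B) = transpose A - (transpose B :: real^'a^'b)"
  by (simp add: vec_eq_iff transpose_def)

lemma diag_transpose: "is_diag D \<Longrightarrow> transpose D = D"
  unfolding is_diag_def by (auto simp: vec_eq_iff transpose_def) metis

theorem proposition4:
  fixes X Z :: "real^'k^'n" and DX DZ :: "real^'k^'k"
    and c eta kt :: real and J :: "'k set"
  assumes "is_diag DX" and "is_diag DZ"
    and "0 < c" and "c < 1"
    and "J \<noteq> {}"
    and "kt > 0"
    and "Inf {norm ((X ** DX) *v \<Delta>) / (sqrt (real CARD('n)) * norm (restr J \<Delta>)) | \<Delta>.
              \<Delta> \<in> coneC c J - {0}} \<ge> kt"
    and "0 < eta" and "eta < 1"
    and "mat_maxabs ((1 / real CARD('n)) *\<^sub>R (transpose (X ** DX - Z ** DZ) ** (X ** DX)))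
           \<le> eta * (1 - c)^2 * kt^2 / (4 * real (card J))"
  shows "kappa1 c ((1 / real CARD('n)) *\<^sub>R (DZ ** transpose Z ** X ** DX)) J
           \<ge> (1 - eta) * (1 - c)^2 * kt^2 / (4 * real (card J))"
proof -
  define n where "n = real CARD('n)"
  define A where "A = X ** DX"
  define B where "B = Z ** DZ"
  define M where "M = (1 / n) *\<^sub>R (transpose (A - B) ** A)"
  define mJ where "mJ = real (card J)"
  define Psi where "Psi = (1 / n) *\<^sub>R (DZ ** transpose Z ** X ** DX)"
  have npos: "n > 0" unfolding n_def by simp
  have mJpos: "mJ > 0" unfolding mJ_def using assms(5) by (simp add: card_gt_0_iff)
  have trB: "transpose B = DZ ** transpose Z"
    unfolding B_def matrix_transpose_mul diag_transpose[OF assms(2)] ..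
  have MB: "mat_maxabs M \<le> eta * (1 - c)^2 * kt^2 / (4 * mJ)"
    using assms(10) unfolding M_def A_def B_def n_def mJ_def .
  define S where "S = {linfnorm (Psi *v \<Delta>) | \<Delta>. \<Delta> \<in> coneC c J \<and> l1norm \<Delta> = 1}"
  define T where "T = {norm ((X ** DX) *v \<Delta>) / (sqrt (real CARD('n)) * norm (restr J \<Delta>)) | \<Delta>.
              \<Delta> \<in> coneC c J - {0}}"
  have Tbdd: "bdd_below T" unfolding T_def by (rule bdd_belowI[of _ 0]) auto
  have lowT: "kt \<le> t" if "t \<in> T" for t
    using cInf_lower[OF that Tbdd] assms(7) unfolding T_def by linarith
  have key: "(1 - eta) * (1 - c)^2 * kt^2 / (4 * mJ) \<le> linfnorm (Psi *v \<Delta>)"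
    if D: "\<Delta> \<in> coneC c J" "l1norm \<Delta> = 1" for \<Delta>
  proof -
    define w where "w = A *v \<Delta>"
    define t where "t = norm (restr J \<Delta>)"
    define l where "l = l1norm (restr J \<Delta>)"
    have cone: "l1norm (restr (- J) \<Delta>) \<le> (1 + c) / (1 - c) * l"
      using D(1) unfolding coneC_def l_def by simp
    have "1 = l + l1norm (restr (- J) \<Delta>)" using l1_split[of \<Delta> J] D(2) l_def by simp
    also have "\<dots> \<le> l + (1 + c) / (1 - c) * l" using cone by simp
    also have "\<dots> = 2 / (1 - c) * l" using assms(4) by (simp add: field_simps)
    finally have l1: "1 \<le> 2 / (1 - c) * l" .
    have lt: "l \<le> sqrt mJ * t" unfolding l_def t_def mJ_def by (rule l1_J_le)
    have lpos: "(1 - c) / 2 \<le> l" using l1 assms(4) by (simp add: field_simps)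
    have tpos: "t > 0"
    proof -
      have "0 < (1 - c) / 2" using assms(4) by simp
      hence "0 < sqrt mJ * t" using lt lpos by linarith
      thus ?thesis using mJpos by (simp add: zero_less_mult_iff)
    qed
    have "(1 - c) / 2 \<le> sqrt mJ * t" using lt lpos by linarith
    hence "((1 - c) / 2)^2 \<le> (sqrt mJ * t)^2"
      using assms(4) by (intro power_mono) simp_all
    hence t2: "(1 - c)^2 / (4 * mJ) \<le> t^2"
      using mJpos by (simp add: power_mult_distrib field_simps power2_eq_square)
    have "\<Delta> \<noteq> 0" using D(2) by (auto simp: l1norm_def)
    hence "norm w / (sqrt n * t) \<in> T"
      unfolding T_def w_def t_def A_def n_def using D(1) by blast
    hence "kt \<le> norm w / (sqrt n * t)" by (rule lowT)
    hence "kt * (sqrt n * t) \<le> norm w" using tpos npos by (simp add: field_simps)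
    hence "(kt * (sqrt n * t))^2 \<le> (norm w)^2"
      using assms(6) tpos npos by (intro power_mono) simp_all
    hence w2: "kt^2 * t^2 \<le> (1 / n) * (w \<bullet> w)"
      using npos by (simp add: power_mult_distrib field_simps power2_norm_eq_inner)
    have "kt^2 * ((1 - c)^2 / (4 * mJ)) \<le> kt^2 * t^2"
      using t2 by (intro mult_left_mono) simp_all
    with w2 have main: "kt^2 * (1 - c)^2 / (4 * mJ) \<le> (1 / n) * (w \<bullet> w)" by simp
    have Mv: "M *v \<Delta> = (1 / n) *\<^sub>R (transpose A *v w - transpose B *v w)"
      unfolding M_def w_def
      by (simp add: scaleR_matrix_vector_assoc[symmetric] matrix_vector_mul_assoc[symmetric]
          transpose_diff matrix_vector_mult_diff_rdistrib)
    have Pv: "Psi *v \<Delta> = (1 / n) *\<^sub>R (transpose B *v w)"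
      unfolding Psi_def w_def trB A_def
      by (simp add: scaleR_matrix_vector_assoc[symmetric] matrix_vector_mul_assoc[symmetric]
          matrix_mul_assoc)
    have ww: "\<Delta> \<bullet> (transpose A *v w) = w \<bullet> w"
      unfolding dot_lmul_matrix[symmetric] vector_transpose_matrix w_def ..
    have dP: "\<Delta> \<bullet> (Psi *v \<Delta>) = (1 / n) * (w \<bullet> w) - \<Delta> \<bullet> (M *v \<Delta>)"
      unfolding Pv Mv inner_scaleR_right inner_diff_right ww by (simp add: algebra_simps)
    have "\<bar>\<Delta> \<bullet> (M *v \<Delta>)\<bar> \<le> mat_maxabs M * l1norm \<Delta> * l1norm \<Delta>" by (rule dot_mat_bound)
    hence dM: "\<Delta> \<bullet> (M *v \<Delta>) \<le> eta * (1 - c)^2 * kt^2 / (4 * mJ)" using D(2) MB by simp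
    have "\<Delta> \<bullet> (Psi *v \<Delta>) \<le> linfnorm (Psi *v \<Delta>)" using dot_linf[of \<Delta> "Psi *v \<Delta>"] D(2) by simp
    moreover have "(1 - eta) * (1 - c)^2 * kt^2 / (4 * mJ)
        = kt^2 * (1 - c)^2 / (4 * mJ) - eta * (1 - c)^2 * kt^2 / (4 * mJ)"
      using mJpos by (simp add: field_simps)
    ultimately show ?thesis using dP dM main by linarith
  qed
  obtain j where j: "j \<in> J" using assms(5) by blast
  have ax1: "l1norm (axis j (1::real)) = 1"
  proof -
    have "l1norm (axis j (1::real)) = (\<Sum>i\<in>UNIV. if i = j then 1 else 0)"
      unfolding l1norm_def by (rule sum.cong) (auto simp: axis_def)
    thus ?thesis by simp
  qed
  have "restr (- J) (axis j (1::real)) = 0" using j by (auto simp: vec_eq_iff restr_def axis_def)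
  hence "axis j 1 \<in> coneC c J"
    unfolding coneC_def using assms(3,4)
    by (simp add: l1norm_def)
  hence Sne: "S \<noteq> {}" unfolding S_def using ax1 by blast
  have "(1 - eta) * (1 - c)^2 * kt^2 / (4 * mJ) \<le> Inf S"
    by (rule cInf_greatest[OF Sne]) (auto simp: S_def intro: key)
  thus ?thesis unfolding S_def kappa1_def Psi_def mJ_def n_def .
qed

end
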